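(* Let $w\in S_n$. If $|C(w)|=1$ then $|B(w)|=|R(w)|$, and if $|B(w)|=1$ then $|C(w)|=|R(w)|$.
   Context: $S_n$ is generated by the adjacent transpositions $s_1,\dots,s_{n-1}$. A reduced word for $w$ is a word $i_1\cdots i_k$ with $w=s_{i_1}\cdots s_{i_k}$ and $k$ minimal; $R(w)$ is the set of reduced words. A braid move replaces a factor (consecutive letters) $i(i+1)i$ by $(i+1)i(i+1)$ or vice versa; a commutation move replaces a factor $ij$ with $|i-j|>1$ by $ji$. $B(w)$ (resp. $C(w)$) is the set of equivalence classes of $R(w)$ under sequences of braid moves (resp. commutation moves). *)

theory Defs
  imports "HOL-Combinatorics.Transposition" "HOL-Combinatorics.Permutations"
begin

text \<open>S_n is realised as the permutations of {1..n}; s_i is the transposition of i and i+1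
  (1 \<le> i \<le> n-1). A word is a list of letters; its product is s_{i1} \<circ> ... \<circ> s_{ik}.\<close>

definition sgen :: "nat \<Rightarrow> nat \<Rightarrow> nat" where
  "sgen i = transpose i (Suc i)"

definition word_prod :: "nat list \<Rightarrow> nat \<Rightarrow> nat" where
  "word_prod ws = foldr (\<lambda>i f. sgen i \<circ> f) ws id"

definition is_word :: "nat \<Rightarrow> nat list \<Rightarrow> bool" where
  "is_word n ws \<longleftrightarrow> set ws \<subseteq> {1..<n}"

definition red_words :: "nat \<Rightarrow> (nat \<Rightarrow> nat) \<Rightarrow> nat list set" where
  "red_words n w = {ws. is_word n ws \<and> word_prod ws = w \<and>
      (\<forall>vs. is_word n vs \<and> word_prod vs = w \<longrightarrow> length ws \<le> length vs)}"

definition braid_move :: "nat list \<Rightarrow> nat list \<Rightarrow> bool" where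
  "braid_move u v \<longleftrightarrow> (\<exists>a b i.
      (u = a @ [i, Suc i, i] @ b \<and> v = a @ [Suc i, i, Suc i] @ b) \<or>
      (u = a @ [Suc i, i, Suc i] @ b \<and> v = a @ [i, Suc i, i] @ b))"

definition comm_move :: "nat list \<Rightarrow> nat list \<Rightarrow> bool" where
  "comm_move u v \<longleftrightarrow> (\<exists>a b i j. (i > Suc j \<or> j > Suc i) \<and>
      u = a @ [i, j] @ b \<and> v = a @ [j, i] @ b)"

definition braid_classes :: "nat \<Rightarrow> (nat \<Rightarrow> nat) \<Rightarrow> nat list set set" where
  "braid_classes n w = red_words n w //
     {(u, v). u \<in> red_words n w \<and> v \<in> red_words n w \<and> braid_move\<^sup>*\<^sup>* u v}"

definition comm_classes :: "nat \<Rightarrow> (nat \<Rightarrow> nat) \<Rightarrow> nat list set set" where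
  "comm_classes n w = red_words n w //
     {(u, v). u \<in> red_words n w \<and> v \<in> red_words n w \<and> comm_move\<^sup>*\<^sup>* u v}"

end

theory Submission
  imports Defs
begin

lemma word_prod_append: "word_prod (xs @ ys) = word_prod xs \<circ> word_prod ys"
  by (induction xs) (auto simp: word_prod_def)

lemma word_prod_3: "word_prod (a @ x @ b) = word_prod a \<circ> word_prod x \<circ> word_prod b"
  by (simp add: word_prod_append comp_assoc)

lemma wp2: "word_prod [i, j] = sgen i \<circ> sgen j"
  by (simp add: word_prod_def)

lemma wp3: "word_prod [i, j, k] = sgen i \<circ> (sgen j \<circ> sgen k)"
  by (simp add: word_prod_def)

lemma braid_rel: "sgen i \<circ> (sgen (Suc i) \<circ> sgen i) = sgen (Suc i) \<circ> (sgen i \<circ> sgen (Suc i))"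
  by (auto simp: sgen_def transpose_def fun_eq_iff)

lemma comm_rel: "i > Suc j \<or> j > Suc i \<Longrightarrow> sgen i \<circ> sgen j = sgen j \<circ> sgen i"
  by (auto simp: sgen_def transpose_def fun_eq_iff)

lemma red_len: "u \<in> red_words n w \<Longrightarrow> is_word n v \<Longrightarrow> word_prod v = word_prod u
   \<Longrightarrow> length v = length u \<Longrightarrow> v \<in> red_words n w"
  unfolding red_words_def by auto

lemma braid_red: assumes "u \<in> red_words n w" "braid_move u v" shows "v \<in> red_words n w"
proof -
  from assms(2) obtain a b i where
    "(u = a @ [i, Suc i, i] @ b \<and> v = a @ [Suc i, i, Suc i] @ b) \<or>
      (u = a @ [Suc i, i, Suc i] @ b \<and> v = a @ [i, Suc i, i] @ b)"
    unfolding braid_move_def by blast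
  moreover have "is_word n u" using assms(1) by (simp add: red_words_def)
  moreover have "word_prod (a @ [i, Suc i, i] @ b) = word_prod (a @ [Suc i, i, Suc i] @ b)"
    by (simp only: word_prod_3 wp3 braid_rel)
  ultimately show ?thesis
    by (intro red_len[OF assms(1)]; auto simp: is_word_def)
qed

lemma comm_red: assumes "u \<in> red_words n w" "comm_move u v" shows "v \<in> red_words n w"
proof -
  from assms(2) obtain a b i j where
    h: "(i > Suc j \<or> j > Suc i)" "u = a @ [i, j] @ b" "v = a @ [j, i] @ b"
    unfolding comm_move_def by blast
  moreover have "is_word n u" using assms(1) by (simp add: red_words_def)
  moreover have "word_prod (a @ [i, j] @ b) = word_prod (a @ [j, i] @ b)"
    by (simp only: word_prod_3 wp2 comm_rel[OF h(1)])
  ultimately show ?thesis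
    by (intro red_len[OF assms(1)]; auto simp: is_word_def)
qed

lemma comm_mset: "comm_move\<^sup>*\<^sup>* u v \<Longrightarrow> mset u = mset v"
proof (induction rule: rtranclp_induct)
  case (step y z)
  then show ?case by (auto simp: comm_move_def)
qed simp

lemma braid_mset: "braid_move u v \<Longrightarrow> mset u \<noteq> mset v"
proof
  assume "braid_move u v" "mset u = mset v"
  then obtain a b i where
    "(u = a @ [i, Suc i, i] @ b \<and> v = a @ [Suc i, i, Suc i] @ b) \<or>
      (u = a @ [Suc i, i, Suc i] @ b \<and> v = a @ [i, Suc i, i] @ b)"
    unfolding braid_move_def by blast
  then have "count (mset u) i \<noteq> count (mset v) i" by auto
  then show False using \<open>mset u = mset v\<close> by simp
qed

definition gg :: "nat \<Rightarrow> nat \<Rightarrow> nat \<Rightarrow> nat" where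
  "gg c k = (if k \<le> c then transpose 0 1 else transpose 1 2)"

definition FF :: "nat \<Rightarrow> nat list \<Rightarrow> nat \<Rightarrow> nat" where
  "FF c ws = foldr (\<lambda>k f. gg c k \<circ> f) ws id"

lemma FF_append: "FF c (xs @ ys) = FF c xs \<circ> FF c ys"
  by (induction xs) (auto simp: FF_def)

lemma FF_3: "FF c (a @ x @ b) = FF c a \<circ> FF c x \<circ> FF c b"
  by (simp add: FF_append comp_assoc)

lemma FF2: "FF c [i, j] = gg c i \<circ> gg c j"
  by (simp add: FF_def)

lemma FF3: "FF c [i, j, k] = gg c i \<circ> (gg c j \<circ> gg c k)"
  by (simp add: FF_def)

lemma FF_Cons: "FF c (k # ws) = gg c k \<circ> FF c ws"
  by (simp add: FF_def)

lemma gg_bij: "bij (gg c k)"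
  by (simp add: gg_def)

lemma FF_bij: "bij (FF c ws)"
proof (induction ws)
  case Nil
  then show ?case by (simp add: FF_def bij_id[unfolded id_def])
next
  case (Cons k ws)
  then show ?case by (simp only: FF_Cons) (rule bij_comp[OF Cons gg_bij])
qed

lemma gg_braid: "gg c i \<circ> (gg c (Suc i) \<circ> gg c i) = gg c (Suc i) \<circ> (gg c i \<circ> gg c (Suc i))"
  by (auto simp: gg_def transpose_def fun_eq_iff)

lemma braid_FF: "braid_move\<^sup>*\<^sup>* u v \<Longrightarrow> FF c u = FF c v"
proof (induction rule: rtranclp_induct)
  case (step y z)
  from step(2) obtain a b i where
    "(y = a @ [i, Suc i, i] @ b \<and> z = a @ [Suc i, i, Suc i] @ b) \<or>
      (y = a @ [Suc i, i, Suc i] @ b \<and> z = a @ [i, Suc i, i] @ b)"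
    unfolding braid_move_def by blast
  moreover have "FF c (a @ [i, Suc i, i] @ b) = FF c (a @ [Suc i, i, Suc i] @ b)"
    by (simp only: FF_3 FF3 gg_braid)
  ultimately have "FF c y = FF c z" by auto
  then show ?case using step(3) by simp
qed simp

lemma cancel_mid:
  assumes "A \<circ> X \<circ> B = A \<circ> Y \<circ> B" "bij A" "bij B"
  shows "X = Y"
proof
  fix y
  obtain x where "y = B x" using \<open>bij B\<close> by (metis bij_pointE)
  have "A (X (B x)) = A (Y (B x))" using assms(1) by (metis comp_apply)
  then show "X y = Y y" using \<open>y = B x\<close> \<open>bij A\<close> by (simp add: bij_def inj_eq)
qed

lemma comm_FF: assumes "comm_move u v" shows "\<exists>c. FF c u \<noteq> FF c v"
proof -
  from assms obtain a b i j where
    h: "(i > Suc j \<or> j > Suc i)" "u = a @ [i, j] @ b" "v = a @ [j, i] @ b"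
    unfolding comm_move_def by blast
  let ?c = "min i j"
  have ne: "gg ?c i \<circ> gg ?c j \<noteq> gg ?c j \<circ> gg ?c i"
  proof
    assume e: "gg ?c i \<circ> gg ?c j = gg ?c j \<circ> gg ?c i"
    have "(gg ?c i \<circ> gg ?c j) 0 \<noteq> (gg ?c j \<circ> gg ?c i) 0"
      using h(1) by (auto simp: gg_def transpose_def)
    then show False using e by simp
  qed
  have "FF ?c u \<noteq> FF ?c v"
  proof
    assume "FF ?c u = FF ?c v"
    then have "FF ?c a \<circ> (gg ?c i \<circ> gg ?c j) \<circ> FF ?c b = FF ?c a \<circ> (gg ?c j \<circ> gg ?c i) \<circ> FF ?c b"
      using h by (simp only: FF_3 FF2)
    then show False using ne cancel_mid FF_bij by blast
  qed
  then show ?thesis by blast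
qed

lemma one_class:
  assumes "card (R // {(u,v). u \<in> R \<and> v \<in> R \<and> M\<^sup>*\<^sup>* u v}) = 1" "u \<in> R" "v \<in> R"
  shows "M\<^sup>*\<^sup>* u v"
proof -
  let ?E = "{(u,v). u \<in> R \<and> v \<in> R \<and> M\<^sup>*\<^sup>* u v}"
  obtain X where X: "R // ?E = {X}" using assms(1) card_1_singletonE by blast
  have "?E `` {u} \<in> R // ?E" "?E `` {v} \<in> R // ?E" using assms(2,3) by (blast intro: quotientI)+
  then have "?E `` {u} = ?E `` {v}" using X by auto
  moreover have "v \<in> ?E `` {v}" using assms(3) by auto
  ultimately have "v \<in> ?E `` {u}" by simp
  then show ?thesis by auto
qed

lemma singleton_classes:
  assumes "\<forall>u\<in>R. \<forall>v. \<not> M u v"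
  shows "card (R // {(u,v). u \<in> R \<and> v \<in> R \<and> M\<^sup>*\<^sup>* u v}) = card R"
proof -
  let ?E = "{(u,v). u \<in> R \<and> v \<in> R \<and> M\<^sup>*\<^sup>* u v}"
  have "\<And>u v. u \<in> R \<Longrightarrow> M\<^sup>*\<^sup>* u v \<Longrightarrow> u = v"
  proof -
    fix u v assume "u \<in> R" "M\<^sup>*\<^sup>* u v"
    then show "u = v" using assms by (metis converse_rtranclpE)
  qed
  then have "\<And>x. x \<in> R \<Longrightarrow> ?E `` {x} = {x}" by auto
  then have "R // ?E = (\<lambda>x. {x}) ` R" unfolding quotient_def by auto
  moreover have "inj_on (\<lambda>x. {x}) R" by (auto simp: inj_on_def)
  ultimately show ?thesis by (simp add: card_image)
qed

theorem lemma4p7: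
  fixes n :: nat and w :: "nat \<Rightarrow> nat"
  assumes "w permutes {1..n}"
  shows "(card (comm_classes n w) = 1 \<longrightarrow> card (braid_classes n w) = card (red_words n w)) \<and>
         (card (braid_classes n w) = 1 \<longrightarrow> card (comm_classes n w) = card (red_words n w))"
proof (intro conjI impI)
  assume c: "card (comm_classes n w) = 1"
  have "\<forall>u\<in>red_words n w. \<forall>v. \<not> braid_move u v"
  proof (intro ballI allI notI)
    fix u v assume u: "u \<in> red_words n w" and b: "braid_move u v"
    have "v \<in> red_words n w" using braid_red[OF u b] .
    then have "comm_move\<^sup>*\<^sup>* u v" using one_class[OF c[unfolded comm_classes_def] u] by blast
    then show False using comm_mset braid_mset[OF b] by blast
  qed
  then show "card (braid_classes n w) = card (red_words n w)"
    unfolding braid_classes_def by (rule singleton_classes)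
next
  assume c: "card (braid_classes n w) = 1"
  have "\<forall>u\<in>red_words n w. \<forall>v. \<not> comm_move u v"
  proof (intro ballI allI notI)
    fix u v assume u: "u \<in> red_words n w" and b: "comm_move u v"
    have "v \<in> red_words n w" using comm_red[OF u b] .
    then have "braid_move\<^sup>*\<^sup>* u v" using one_class[OF c[unfolded braid_classes_def] u] by blast
    then show False using braid_FF comm_FF[OF b] by blast
  qed
  then show "card (comm_classes n w) = card (red_words n w)"
    unfolding comm_classes_def by (rule singleton_classes)
qed

end
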